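(* Let $X_M^{(0)}, X_S^{(0)}$ be scalar random variables such that $[X_M^{(0)},X_S^{(0)}]$ is bivariate normal with mean zero, unit variances and covariance $\rho$. Let $X_S^{(t)}$ and $X_S^{(t+1)}$ be generated from $X_S^{(0)}$ by a forward noising process (independent of $X_M^{(0)}$ given $X_S^{(0)}$, and with $X_S^{(t+1)}$ independent of $(X_S^{(0)},X_M^{(0)})$ given $X_S^{(t)}$) with $q(X_S^{(t)}\mid X_S^{(0)})=\mathcal{N}(\sqrt{\bar\alpha_t}\,X_S^{(0)},1-\bar\alpha_t)$ and $q(X_S^{(t+1)}\mid X_S^{(t)})=\mathcal{N}(\sqrt{1-\beta_{t+1}}\,X_S^{(t)},\beta_{t+1})$, where $\beta_{t+1},\bar\alpha_t\in(0,1)$. Then $$\mathbb{E}\,\mathrm{KL}\Big(q(X_S^{(t)}\mid X_S^{(t+1)},X_M^{(0)})\,\Big\|\,q(X_S^{(t)}\mid X_S^{(t+1)})\Big)\ \ge\ -\tfrac12\Big(\log(1-\beta_{t+1}\bar\alpha_t\rho^2)+\beta_{t+1}\bar\alpha_t\rho^2\Big),$$ where the expectation is over the joint law of $(X_M^{(0)},X_S^{(t+1)})$.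
   Context: $\mathrm{KL}(f\|g)=\int f\log(f/g)$ with natural logarithm; $q(\cdot\mid\cdot)$ denotes conditional densities under the joint law of the described random variables. *)

theory Defs
  imports "HOL-Probability.Probability"
begin

definition gauss :: "real \<Rightarrow> real \<Rightarrow> real measure" where
  "gauss \<mu> v = density lborel (\<lambda>x. ennreal (normal_density \<mu> (sqrt v) x))"

text \<open>Law of [X_M, X_S] bivariate normal, mean zero, unit variances, covariance rho
  (|rho| <= 1), realised as a linear image of two independent standard normals,
  so that the degenerate case |rho| = 1 is included.\<close>
definition bivariate_std_normal :: "real \<Rightarrow> (real \<times> real) measure" where
  "bivariate_std_normal \<rho> =
     distr (gauss 0 1 \<Otimes>\<^sub>M gauss 0 1) borel
       (\<lambda>(z1, z2). (z1, \<rho> * z1 + sqrt (1 - \<rho>\<^sup>2) * z2))"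

definition model_law :: "real \<Rightarrow> real \<Rightarrow> real \<Rightarrow> (real \<times> real \<times> real \<times> real) measure" where
  "model_law \<rho> abar \<beta> =
     bind (bivariate_std_normal \<rho>) (\<lambda>(m, s0).
       bind (gauss (sqrt abar * s0) (1 - abar)) (\<lambda>st.
         bind (gauss (sqrt (1 - \<beta>) * st) \<beta>) (\<lambda>st1.
           return borel (m, s0, st, st1))))"

definition cond_dens_full :: "(real \<times> real \<times> real \<Rightarrow> ennreal) \<Rightarrow> real \<Rightarrow> real \<Rightarrow> real \<Rightarrow> real" where
  "cond_dens_full f st st1 m =
     enn2real (f (st, st1, m)) / (\<integral>s. enn2real (f (s, st1, m)) \<partial>lborel)"

definition cond_dens_marg :: "(real \<times> real \<times> real \<Rightarrow> ennreal) \<Rightarrow> real \<Rightarrow> real \<Rightarrow> real" where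
  "cond_dens_marg f st st1 =
     (\<integral>m. enn2real (f (st, st1, m)) \<partial>lborel) /
     (\<integral>s. (\<integral>m. enn2real (f (s, st1, m)) \<partial>lborel) \<partial>lborel)"

definition kl_div :: "(real \<Rightarrow> real) \<Rightarrow> (real \<Rightarrow> real) \<Rightarrow> real" where
  "kl_div p q = (\<integral>x. p x * ln (p x / q x) \<partial>lborel)"

end

theory Submission
  imports Defs
begin

definition nd :: "real \<Rightarrow> real \<Rightarrow> real \<Rightarrow> real" where
  "nd \<mu> v x = normal_density \<mu> (sqrt v) x"

lemma nd_alt: "0 < v \<Longrightarrow> nd \<mu> v x = exp (-(x - \<mu>)\<^sup>2 / (2 * v)) / sqrt (2 * pi * v)"
  by (simp add: nd_def normal_density_def)

lemma nd_pos: "0 < v \<Longrightarrow> 0 < nd \<mu> v x"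
  by (simp add: nd_def normal_density_pos)

lemma nd_nonneg[simp]: "0 \<le> nd \<mu> v x"
  by (simp add: nd_def)

lemma gp:
  assumes v1: "0 < v1" and v2: "0 < v2"
  shows "nd \<mu>1 v1 x * nd (\<alpha> + k * x) v2 y =
    nd (\<alpha> + k * \<mu>1) (v2 + k\<^sup>2 * v1) y *
    nd (\<mu>1 + k * v1 * (y - \<alpha> - k * \<mu>1) / (v2 + k\<^sup>2 * v1)) (v1 * v2 / (v2 + k\<^sup>2 * v1)) x"
proof -
  define V where "V = v2 + k\<^sup>2 * v1"
  have V: "0 < V" using v1 v2 by (simp add: V_def add_pos_nonneg)
  have w: "0 < v1 * v2 / V" using v1 v2 V by simp
  have pre: "sqrt (2 * pi * v1) * sqrt (2 * pi * v2) = sqrt (2 * pi * V) * sqrt (2 * pi * (v1 * v2 / V))"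
    using V v1 v2 by (simp add: real_sqrt_mult[symmetric] field_simps)
  have ex: "-(x - \<mu>1)\<^sup>2 / (2 * v1) + -(y - (\<alpha> + k * x))\<^sup>2 / (2 * v2) =
     -(y - (\<alpha> + k * \<mu>1))\<^sup>2 / (2 * V) + -(x - (\<mu>1 + k * v1 * (y - \<alpha> - k * \<mu>1) / V))\<^sup>2 / (2 * (v1 * v2 / V))"
  proof -
    have "V \<noteq> 0" "v1 \<noteq> 0" "v2 \<noteq> 0" using V v1 v2 by auto
    then show ?thesis
      apply (simp add: divide_simps)
      using V_def by algebra
  qed
  have "nd \<mu>1 v1 x * nd (\<alpha> + k * x) v2 y = exp (-(x - \<mu>1)\<^sup>2 / (2 * v1) + -(y - (\<alpha> + k * x))\<^sup>2 / (2 * v2)) / (sqrt (2 * pi * v1) * sqrt (2 * pi * v2))"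
    by (simp add: nd_alt v1 v2 mult_exp_exp)
  also have "\<dots> = exp (-(y - (\<alpha> + k * \<mu>1))\<^sup>2 / (2 * V) + -(x - (\<mu>1 + k * v1 * (y - \<alpha> - k * \<mu>1) / V))\<^sup>2 / (2 * (v1 * v2 / V))) / (sqrt (2 * pi * V) * sqrt (2 * pi * (v1 * v2 / V)))"
    by (simp only: ex pre)
  also have "\<dots> = nd (\<alpha> + k * \<mu>1) V y * nd (\<mu>1 + k * v1 * (y - \<alpha> - k * \<mu>1) / V) (v1 * v2 / V) x"
    by (simp add: nd_alt V w mult_exp_exp)
  finally show ?thesis unfolding V_def .
qed

lemma nd_int: "0 < v \<Longrightarrow> (\<integral>x. nd \<mu> v x \<partial>lborel) = 1"
  unfolding nd_def by (rule integral_normal_density) simp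

lemma nd_integrable: "0 < v \<Longrightarrow> integrable lborel (nd \<mu> v)"
  unfolding nd_def[abs_def] by (rule integrable_normal_density) simp

lemma nd_nn: "0 < v \<Longrightarrow> (\<integral>\<^sup>+x. ennreal (nd \<mu> v x) \<partial>lborel) = 1"
  by (subst nn_integral_eq_integral) (auto simp: nd_int nd_integrable)

lemma nd_measurable[measurable]: "(\<lambda>(x::real). nd \<mu> v x) \<in> borel_measurable borel"
  unfolding nd_def by measurable

lemma nd_measurable2[measurable]:
  assumes [measurable]: "f \<in> borel_measurable M" "h \<in> borel_measurable M"
  shows "(\<lambda>x. nd (f x) v (h x)) \<in> borel_measurable M"
proof -
  define c :: real where "c = 1 / sqrt (2 * pi * (sqrt v)\<^sup>2)"
  define s :: real where "s = 2 * (sqrt v)\<^sup>2"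
  have "(\<lambda>x. c * exp (- (h x - f x)\<^sup>2 / s)) \<in> borel_measurable M"
    by measurable
  then show ?thesis
    unfolding nd_def normal_density_def c_def s_def .
qed

lemma nd_moment2: "(\<integral>\<^sup>+x. ennreal (nd 0 1 x * x\<^sup>2) \<partial>lborel) = 1"
proof -
  have h: "has_bochner_integral lborel (\<lambda>x. nd 0 1 x * x\<^sup>2) 1"
    using normal_moment_even[of 1 0 1] by (simp add: nd_def)
  show ?thesis
    by (subst nn_integral_eq_integral) (use h in \<open>auto simp: has_bochner_integral_iff\<close>)
qed

lemma kl_gauss:
  assumes v1: "0 < v1" and v2: "0 < v2"
  shows "(\<integral>x. nd \<mu>1 v1 x * ln (nd \<mu>1 v1 x / nd \<mu>2 v2 x) \<partial>lborel)
     = (ln (v2 / v1) + (v1 + (\<mu>1 - \<mu>2)\<^sup>2) / v2 - 1) / 2"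
proof -
  define C where "C = ln (v2 / v1) / 2"
  have s1: "sqrt v1 > 0" "sqrt v2 > 0" using v1 v2 by auto
  have e: "\<And>x. nd \<mu>1 v1 x * ln (nd \<mu>1 v1 x / nd \<mu>2 v2 x) =
     nd \<mu>1 v1 x * (C + (\<mu>1 - \<mu>2)\<^sup>2 / (2 * v2)) + nd \<mu>1 v1 x * (x - \<mu>1) ^ (2 * 1) * (1 / (2 * v2) - 1 / (2 * v1))
     + nd \<mu>1 v1 x * (x - \<mu>1) ^ (2 * 0 + 1) * ((\<mu>1 - \<mu>2) / v2)"
  proof -
    fix x
    have "ln (nd \<mu>1 v1 x / nd \<mu>2 v2 x) = ln (sqrt (2 * pi * v2) / sqrt (2 * pi * v1)) - (x - \<mu>1)\<^sup>2 / (2 * v1) + (x - \<mu>2)\<^sup>2 / (2 * v2)"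
      using v1 v2 by (simp add: nd_alt ln_div ln_mult)
    also have "ln (sqrt (2 * pi * v2) / sqrt (2 * pi * v1)) = C"
      using v1 v2 unfolding C_def by (simp add: real_sqrt_divide[symmetric] ln_sqrt)
    finally have L: "ln (nd \<mu>1 v1 x / nd \<mu>2 v2 x) = C - (x - \<mu>1)\<^sup>2 / (2 * v1) + (x - \<mu>2)\<^sup>2 / (2 * v2)" .
    show "?thesis x" unfolding L using v1 v2 by (simp add: field_simps power2_eq_square)
  qed
  have h1: "has_bochner_integral lborel (\<lambda>x. nd \<mu>1 v1 x * (C + (\<mu>1 - \<mu>2)\<^sup>2 / (2 * v2))) (1 * (C + (\<mu>1 - \<mu>2)\<^sup>2 / (2 * v2)))"
    by (rule has_bochner_integral_mult_left) (use nd_int[OF v1] nd_integrable[OF v1] in \<open>auto simp: has_bochner_integral_iff\<close>)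
  have h2: "has_bochner_integral lborel (\<lambda>x. nd \<mu>1 v1 x * (x - \<mu>1) ^ (2 * 1) * (1 / (2 * v2) - 1 / (2 * v1))) (v1 * (1 / (2 * v2) - 1 / (2 * v1)))"
    using has_bochner_integral_mult_left[OF normal_moment_even[OF s1(1), of \<mu>1 1]] v1 by (simp add: nd_def)
  have h3: "has_bochner_integral lborel (\<lambda>x. nd \<mu>1 v1 x * (x - \<mu>1) ^ (2 * 0 + 1) * ((\<mu>1 - \<mu>2) / v2)) (0 * ((\<mu>1 - \<mu>2) / v2))"
    unfolding nd_def by (rule has_bochner_integral_mult_left[OF normal_moment_odd[OF s1(1)]])
  have "has_bochner_integral lborel (\<lambda>x. nd \<mu>1 v1 x * ln (nd \<mu>1 v1 x / nd \<mu>2 v2 x))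
     (1 * (C + (\<mu>1 - \<mu>2)\<^sup>2 / (2 * v2)) + v1 * (1 / (2 * v2) - 1 / (2 * v1)) + 0 * ((\<mu>1 - \<mu>2) / v2))"
    unfolding e by (intro has_bochner_integral_add h1 h2 h3)
  then have "(\<integral>x. nd \<mu>1 v1 x * ln (nd \<mu>1 v1 x / nd \<mu>2 v2 x) \<partial>lborel) = 1 * (C + (\<mu>1 - \<mu>2)\<^sup>2 / (2 * v2)) + v1 * (1 / (2 * v2) - 1 / (2 * v1)) + 0 * ((\<mu>1 - \<mu>2) / v2)"
    by (rule has_bochner_integral_integral_eq)
  also have "\<dots> = (ln (v2 / v1) + (v1 + (\<mu>1 - \<mu>2)\<^sup>2) / v2 - 1) / 2"
    using v1 v2 unfolding C_def by (simp add: field_simps)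
  finally show ?thesis .
qed

lemma lb2: "(lborel :: (real \<times> real) measure) = lborel \<Otimes>\<^sub>M lborel"
  by (rule lborel_prod[symmetric])
lemma lb3: "(lborel :: (real \<times> real \<times> real) measure) = lborel \<Otimes>\<^sub>M lborel"
  by (rule lborel_prod[symmetric])

lemma nn2:
  fixes G :: "real \<times> real \<Rightarrow> ennreal"
  assumes [measurable]: "G \<in> borel_measurable borel"
  shows "(\<integral>\<^sup>+x. G x \<partial>lborel) = (\<integral>\<^sup>+y. \<integral>\<^sup>+m. G (y, m) \<partial>lborel \<partial>lborel)"
proof -
  have "G \<in> borel_measurable (lborel \<Otimes>\<^sub>M lborel)" unfolding lb2[symmetric] by simp
  then show ?thesis by (subst lb2) (rule lborel.nn_integral_fst[symmetric])
qed

lemma nn3: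
  fixes G :: "real \<times> real \<times> real \<Rightarrow> ennreal"
  assumes [measurable]: "G \<in> borel_measurable borel"
  shows "(\<integral>\<^sup>+x. G x \<partial>lborel) = (\<integral>\<^sup>+s. \<integral>\<^sup>+y. \<integral>\<^sup>+m. G (s, y, m) \<partial>lborel \<partial>lborel \<partial>lborel)"
proof -
  have "G \<in> borel_measurable (lborel \<Otimes>\<^sub>M lborel)" unfolding lb3[symmetric] by simp
  then have "(\<integral>\<^sup>+x. G x \<partial>lborel) = (\<integral>\<^sup>+s. \<integral>\<^sup>+p. G (s, p) \<partial>lborel \<partial>lborel)"
    by (subst lb3) (rule lborel.nn_integral_fst[symmetric])
  also have "\<dots> = (\<integral>\<^sup>+s. \<integral>\<^sup>+y. \<integral>\<^sup>+m. G (s, y, m) \<partial>lborel \<partial>lborel \<partial>lborel)"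
    by (intro nn_integral_cong nn2) simp
  finally show ?thesis .
qed

lemma swap2:
  fixes H :: "real \<Rightarrow> real \<Rightarrow> ennreal"
  assumes "(\<lambda>p. H (fst p) (snd p)) \<in> borel_measurable borel"
  shows "(\<integral>\<^sup>+x. \<integral>\<^sup>+y. H x y \<partial>lborel \<partial>lborel) = (\<integral>\<^sup>+y. \<integral>\<^sup>+x. H x y \<partial>lborel \<partial>lborel)"
proof -
  have "case_prod H \<in> borel_measurable (lborel \<Otimes>\<^sub>M lborel)"
    unfolding lb2[symmetric] using assms by (simp add: case_prod_beta')
  then show ?thesis by (rule lborel_pair.Fubini'[symmetric])
qed

lemma ae3_split:
  fixes P :: "real \<times> real \<times> real \<Rightarrow> bool"
  assumes [measurable]: "Measurable.pred borel P"
  assumes ae: "AE x in lborel. P x"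
  shows "AE y in lborel. AE m in lborel. AE s in lborel. P (s, y, m)"
proof -
  have "AE x in lborel \<Otimes>\<^sub>M lborel. P x" using ae unfolding lb3 .
  then have "AE s in lborel. AE p in lborel. P (s, p)" by (rule lborel_pair.AE_pair)
  moreover have "{x \<in> space (lborel \<Otimes>\<^sub>M lborel). P (fst x, snd x)} \<in> sets (lborel \<Otimes>\<^sub>M (lborel :: (real \<times> real) measure))"
    unfolding lb3[symmetric] by (simp add: pred_def)
  ultimately have "AE p in lborel. AE s in lborel. P (s, p)"
    using lborel_pair.AE_commute[of "\<lambda>s p. P (s, p)"] by simp
  then have "AE p in lborel \<Otimes>\<^sub>M lborel. AE s in lborel. P (s, p)" unfolding lb2 .
  then show ?thesis by (rule lborel_pair.AE_pair)
qed

lemma ae_swap: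
  fixes P :: "real \<Rightarrow> real \<Rightarrow> bool"
  assumes "Measurable.pred borel (\<lambda>p. P (fst p) (snd p))"
  shows "(AE x in lborel. AE y in lborel. P x y) = (AE y in lborel. AE x in lborel. P x y)"
proof -
  have "{x \<in> space (lborel \<Otimes>\<^sub>M lborel). P (fst x) (snd x)} \<in> sets (lborel \<Otimes>\<^sub>M (lborel :: real measure))"
    unfolding lb2[symmetric] using assms by (simp add: pred_def)
  then show ?thesis by (rule lborel_pair.AE_commute)
qed

lemma ae3_join:
  fixes Q :: "real \<times> real \<Rightarrow> bool"
  assumes [measurable]: "Measurable.pred borel Q"
  assumes ae: "AE y in lborel. AE m in lborel. Q (y, m)"
  shows "AE x in (lborel :: (real \<times> real \<times> real) measure). Q (snd x)"
proof -
  have "{x \<in> space (lborel \<Otimes>\<^sub>M lborel). Q x} \<in> sets (lborel \<Otimes>\<^sub>M (lborel :: real measure))"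
    unfolding lb2[symmetric] by (simp add: pred_def)
  then have "AE p in lborel \<Otimes>\<^sub>M lborel. Q p"
    by (rule lborel_pair.AE_pair_measure) (use ae in simp)
  then have 1: "AE p in lborel. Q p" unfolding lb2[symmetric] .
  have "{x \<in> space ((lborel :: real measure) \<Otimes>\<^sub>M (lborel :: (real \<times> real) measure)). Q (snd x)} \<in> sets ((lborel :: real measure) \<Otimes>\<^sub>M (lborel :: (real \<times> real) measure))"
    by measurable
  then have "AE x in (lborel :: real measure) \<Otimes>\<^sub>M (lborel :: (real \<times> real) measure). Q (snd x)"
    by (rule lborel_pair.AE_pair_measure) (use 1 in simp)
  then show ?thesis unfolding lb3[symmetric] .
qed

lemma gauss_nd: "gauss \<mu> v = density lborel (\<lambda>x. ennreal (nd \<mu> v x))"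
  by (simp add: gauss_def nd_def)

lemma sets_gauss[simp, measurable_cong]: "sets (gauss \<mu> v) = sets borel"
  by (simp add: gauss_def)

lemma space_gauss[simp]: "space (gauss \<mu> v) = UNIV"
  by (simp add: gauss_def)

lemma gauss_subprob: "subprob_space (gauss \<mu> v)"
proof (cases "v = 0")
  case True
  have "gauss \<mu> v = density lborel (\<lambda>x. 0)"
    unfolding gauss_def using True by (simp add: normal_density_def)
  then show ?thesis
    by (intro subprob_spaceI) (auto simp: emeasure_density)
next
  case False
  have h: "(sqrt v)\<^sup>2 = (sqrt \<bar>v\<bar>)\<^sup>2"
  proof (cases "v \<ge> 0")
    case False
    then have "sqrt v = - sqrt (- v)" by (metis minus_minus real_sqrt_minus)
    then show ?thesis using False by simp
  qed simp
  have "normal_density \<mu> (sqrt v) = normal_density \<mu> (sqrt \<bar>v\<bar>)"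
    by (auto simp only: fun_eq_iff normal_density_def h)
  then have "gauss \<mu> v = density lborel (\<lambda>x. ennreal (normal_density \<mu> (sqrt \<bar>v\<bar>) x))"
    unfolding gauss_def by simp
  moreover have "prob_space (density lborel (\<lambda>x. ennreal (normal_density \<mu> (sqrt \<bar>v\<bar>) x)))"
    by (rule prob_space_normal_density) (use False in simp)
  ultimately show ?thesis by (simp add: prob_space_imp_subprob_space)
qed

lemma gauss_prob: "0 < v \<Longrightarrow> prob_space (gauss \<mu> v)"
  unfolding gauss_def by (rule prob_space_normal_density) simp

lemma gauss_kernel0: "(\<lambda>x. gauss x v) \<in> measurable borel (subprob_algebra borel)"
proof (rule measurable_subprob_algebra)
  fix A :: "real set" assume A: "A \<in> sets borel"
  have "(\<lambda>x. emeasure (gauss x v) A) = (\<lambda>x. \<integral>\<^sup>+y. ennreal (nd x v y) * indicator A y \<partial>lborel)"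
    using A by (simp add: gauss_nd emeasure_density)
  also have "\<dots> \<in> borel_measurable borel"
    using A by measurable
  finally show "(\<lambda>x. emeasure (gauss x v) A) \<in> borel_measurable borel" .
qed (simp_all add: gauss_subprob)

lemma gauss_kernel[measurable]:
  "f \<in> borel_measurable M \<Longrightarrow> (\<lambda>x. gauss (f x) v) \<in> measurable M (subprob_algebra borel)"
  using measurable_compose[OF _ gauss_kernel0] by blast

lemma nn_gauss:
  assumes "F \<in> borel_measurable borel"
  shows "(\<integral>\<^sup>+x. F x \<partial>gauss \<mu> v) = (\<integral>\<^sup>+x. ennreal (nd \<mu> v x) * F x \<partial>lborel)"
  unfolding gauss_nd using assms by (subst nn_integral_density) auto

lemma bivariate_nn:
  fixes G :: "real \<times> real \<Rightarrow> ennreal"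
  assumes [measurable]: "G \<in> borel_measurable borel"
  shows "(\<integral>\<^sup>+p. G p \<partial>bivariate_std_normal \<rho>) =
    (\<integral>\<^sup>+z1. \<integral>\<^sup>+z2. ennreal (nd 0 1 z1) * (ennreal (nd 0 1 z2) * G (z1, \<rho> * z1 + sqrt (1 - \<rho>\<^sup>2) * z2)) \<partial>lborel \<partial>lborel)"
proof -
  interpret P: pair_prob_space "gauss 0 1" "gauss 0 1"
    by (intro pair_prob_space.intro pair_sigma_finite.intro prob_space_imp_sigma_finite gauss_prob) simp_all
  have sf: "sigma_finite_measure (gauss 0 1)"
    by (intro prob_space_imp_sigma_finite gauss_prob) simp
  have "(\<integral>\<^sup>+p. G p \<partial>bivariate_std_normal \<rho>) =
     (\<integral>\<^sup>+p. G (fst p, \<rho> * fst p + sqrt (1 - \<rho>\<^sup>2) * snd p) \<partial>(gauss 0 1 \<Otimes>\<^sub>M gauss 0 1))"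
    unfolding bivariate_std_normal_def
    by (subst nn_integral_distr) (auto simp: case_prod_beta')
  also have "\<dots> = (\<integral>\<^sup>+z1. \<integral>\<^sup>+z2. G (z1, \<rho> * z1 + sqrt (1 - \<rho>\<^sup>2) * z2) \<partial>gauss 0 1 \<partial>gauss 0 1)"
  proof -
    have "(\<lambda>p. G (fst p, \<rho> * fst p + sqrt (1 - \<rho>\<^sup>2) * snd p)) \<in> borel_measurable (gauss 0 1 \<Otimes>\<^sub>M gauss 0 1)"
      by measurable
    from sigma_finite_measure.nn_integral_fst[OF sf this] show ?thesis by simp
  qed
  also have "\<dots> = (\<integral>\<^sup>+z1. ennreal (nd 0 1 z1) * (\<integral>\<^sup>+z2. G (z1, \<rho> * z1 + sqrt (1 - \<rho>\<^sup>2) * z2) \<partial>gauss 0 1) \<partial>lborel)"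
    by (rule nn_gauss) measurable
  also have "\<dots> = (\<integral>\<^sup>+z1. \<integral>\<^sup>+z2. ennreal (nd 0 1 z1) * (ennreal (nd 0 1 z2) * G (z1, \<rho> * z1 + sqrt (1 - \<rho>\<^sup>2) * z2)) \<partial>lborel \<partial>lborel)"
    by (intro nn_integral_cong, subst nn_gauss, measurable, subst nn_integral_cmult) auto
  finally show ?thesis .
qed

lemma sets_biv[simp, measurable_cong]: "sets (bivariate_std_normal \<rho>) = sets borel"
  by (simp add: bivariate_std_normal_def)

lemma nn_lborel_meas:
  fixes f :: "'a \<Rightarrow> real \<Rightarrow> ennreal"
  assumes "(\<lambda>p. f (fst p) (snd p)) \<in> borel_measurable (N \<Otimes>\<^sub>M borel)"
  shows "(\<lambda>x. \<integral>\<^sup>+y. f x y \<partial>lborel) \<in> borel_measurable N"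
proof -
  have "case_prod f \<in> borel_measurable (N \<Otimes>\<^sub>M lborel)"
    using assms by (simp add: case_prod_beta' measurable_cong_sets[OF sets_pair_measure_cong[OF refl sets_lborel] refl])
  then show ?thesis by (rule lborel.borel_measurable_nn_integral)
qed

lemma model_nn:
  fixes F :: "real \<times> real \<times> real \<times> real \<Rightarrow> ennreal"
  assumes [measurable]: "F \<in> borel_measurable borel"
  shows "(\<integral>\<^sup>+x. F x \<partial>model_law \<rho> abar \<beta>) =
    (\<integral>\<^sup>+z1. \<integral>\<^sup>+z2. ennreal (nd 0 1 z1) * (ennreal (nd 0 1 z2) *
       (\<integral>\<^sup>+st. ennreal (nd (sqrt abar * (\<rho> * z1 + sqrt (1 - \<rho>\<^sup>2) * z2)) (1 - abar) st) *
          (\<integral>\<^sup>+st1. ennreal (nd (sqrt (1 - \<beta>) * st) \<beta> st1) *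
              F (z1, \<rho> * z1 + sqrt (1 - \<rho>\<^sup>2) * z2, st, st1) \<partial>lborel) \<partial>lborel)) \<partial>lborel \<partial>lborel)"
proof -
  define H where "H = (\<lambda>(m, s0). \<integral>\<^sup>+st. ennreal (nd (sqrt abar * s0) (1 - abar) st) *
          (\<integral>\<^sup>+st1. ennreal (nd (sqrt (1 - \<beta>) * st) \<beta> st1) * F (m, s0, st, st1) \<partial>lborel) \<partial>lborel)"
  have I[measurable]: "(\<lambda>p::real\<times>real\<times>real. \<integral>\<^sup>+st1. ennreal (nd (sqrt (1 - \<beta>) * snd (snd p)) \<beta> st1) * F (fst p, fst (snd p), snd (snd p), st1) \<partial>lborel) \<in> borel_measurable borel"
    unfolding borel_prod[symmetric] by (rule nn_lborel_meas) measurable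
  have Hm[measurable]: "H \<in> borel_measurable borel"
    unfolding H_def split_beta' borel_prod[symmetric] by (rule nn_lborel_meas) measurable
  have K: "(\<lambda>(m::real, s0). bind (gauss (sqrt abar * s0) (1 - abar)) (\<lambda>st.
         bind (gauss (sqrt (1 - \<beta>) * st) \<beta>) (\<lambda>st1.
           return borel (m, s0, st, st1)))) \<in> measurable (bivariate_std_normal \<rho>) (subprob_algebra borel)"
  proof -
    have K0: "(\<lambda>(m::real, s0). bind (gauss (sqrt abar * s0) (1 - abar)) (\<lambda>st.
         bind (gauss (sqrt (1 - \<beta>) * st) \<beta>) (\<lambda>st1.
           return borel (m, s0, st, st1)))) \<in> measurable (borel \<Otimes>\<^sub>M borel) (subprob_algebra borel)"
      unfolding borel_prod[symmetric] by measurable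
    have sb: "sets (bivariate_std_normal \<rho>) = sets ((borel :: real measure) \<Otimes>\<^sub>M (borel :: real measure))"
      unfolding borel_prod by simp
    show ?thesis unfolding measurable_cong_sets[OF sb refl] by (rule K0)
  qed
  have inner: "(\<integral>\<^sup>+x. F x \<partial>bind (gauss (sqrt abar * s0) (1 - abar)) (\<lambda>st.
         bind (gauss (sqrt (1 - \<beta>) * st) \<beta>) (\<lambda>st1.
           return borel (m, s0, st, st1)))) = H (m, s0)" for m s0
  proof -
    have K2: "(\<lambda>st. bind (gauss (sqrt (1 - \<beta>) * st) \<beta>) (\<lambda>st1.
           return borel (m, s0, st, st1))) \<in> measurable (gauss (sqrt abar * s0) (1 - abar)) (subprob_algebra borel)"
      by measurable
    have K3: "(\<lambda>st1. return borel (m, s0, st, st1)) \<in> measurable (gauss (sqrt (1 - \<beta>) * st) \<beta>) (subprob_algebra borel)" for st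
      by measurable
    have i2: "(\<integral>\<^sup>+x. F x \<partial>bind (gauss (sqrt (1 - \<beta>) * st) \<beta>) (\<lambda>st1. return borel (m, s0, st, st1)))
       = (\<integral>\<^sup>+st1. ennreal (nd (sqrt (1 - \<beta>) * st) \<beta> st1) * F (m, s0, st, st1) \<partial>lborel)" for st
      by (subst nn_integral_bind[OF _ K3]) (simp_all add: nn_integral_return nn_gauss)
    show ?thesis
      by (subst nn_integral_bind[OF _ K2]) (simp_all add: i2 nn_gauss H_def)
  qed
  have eq1: "(\<integral>\<^sup>+x. F x \<partial>model_law \<rho> abar \<beta>) = (\<integral>\<^sup>+p. H p \<partial>bivariate_std_normal \<rho>)"
    unfolding model_law_def
    by (subst nn_integral_bind[OF _ K]) (simp_all add: inner split_beta')
  show ?thesis unfolding eq1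
    by (subst bivariate_nn[OF Hm]) (simp add: H_def)
qed

definition phi :: "real \<Rightarrow> real \<Rightarrow> real \<Rightarrow> real \<times> real \<times> real \<Rightarrow> real" where
  "phi \<rho> abar \<beta> x = (case x of (s, y, m) \<Rightarrow>
     nd 0 1 m * nd (sqrt abar * \<rho> * m) (1 - abar * \<rho>\<^sup>2) s * nd (sqrt (1 - \<beta>) * s) \<beta> y)"

lemma phi_meas[measurable]: "phi \<rho> abar \<beta> \<in> borel_measurable borel"
  unfolding phi_def split_beta' borel_prod[symmetric] by measurable

lemma conv_z2:
  assumes ab: "0 < abar" "abar < 1" and r: "\<bar>\<rho>\<bar> \<le> 1"
  shows "(\<integral>\<^sup>+z2. ennreal (nd 0 1 z2) * ennreal (nd (sqrt abar * (\<rho> * z1 + sqrt (1 - \<rho>\<^sup>2) * z2)) (1 - abar) st) \<partial>lborel)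
     = ennreal (nd (sqrt abar * \<rho> * z1) (1 - abar * \<rho>\<^sup>2) st)"
proof -
  define k where "k = sqrt abar * sqrt (1 - \<rho>\<^sup>2)"
  have r2: "\<rho>\<^sup>2 \<le> 1" using r by (simp add: abs_square_le_1)
  have k2: "k\<^sup>2 = abar * (1 - \<rho>\<^sup>2)" unfolding k_def using ab r2 by (simp add: power_mult_distrib)
  have V: "1 - abar + k\<^sup>2 * 1 = 1 - abar * \<rho>\<^sup>2" using k2 by (simp add: algebra_simps)
  have Vp: "0 < 1 - abar * \<rho>\<^sup>2"
  proof -
    have "abar * \<rho>\<^sup>2 \<le> abar" using mult_left_mono[OF r2, of abar] ab by simp
    then show ?thesis using ab by linarith
  qed
  have pw: "nd 0 1 z2 * nd (sqrt abar * (\<rho> * z1 + sqrt (1 - \<rho>\<^sup>2) * z2)) (1 - abar) st =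
     nd (sqrt abar * \<rho> * z1) (1 - abar * \<rho>\<^sup>2) st *
     nd (0 + k * 1 * (st - sqrt abar * \<rho> * z1 - k * 0) / (1 - abar + k\<^sup>2 * 1)) (1 * (1 - abar) / (1 - abar + k\<^sup>2 * 1)) z2" for z2
  proof -
    have "sqrt abar * (\<rho> * z1 + sqrt (1 - \<rho>\<^sup>2) * z2) = sqrt abar * \<rho> * z1 + k * z2"
      unfolding k_def by (simp add: algebra_simps)
    then have "nd 0 1 z2 * nd (sqrt abar * (\<rho> * z1 + sqrt (1 - \<rho>\<^sup>2) * z2)) (1 - abar) st =
       nd (sqrt abar * \<rho> * z1 + k * 0) (1 - abar + k\<^sup>2 * 1) st *
       nd (0 + k * 1 * (st - sqrt abar * \<rho> * z1 - k * 0) / (1 - abar + k\<^sup>2 * 1)) (1 * (1 - abar) / (1 - abar + k\<^sup>2 * 1)) z2"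
      using gp[of 1 "1 - abar" 0 z2 "sqrt abar * \<rho> * z1" k st] ab by simp
    then show ?thesis unfolding V by simp
  qed
  have wpos: "0 < (1 - abar) / (1 - abar + k\<^sup>2)" using V Vp ab by simp
  have "(\<integral>\<^sup>+z2. ennreal (nd 0 1 z2) * ennreal (nd (sqrt abar * (\<rho> * z1 + sqrt (1 - \<rho>\<^sup>2) * z2)) (1 - abar) st) \<partial>lborel)
    = (\<integral>\<^sup>+z2. ennreal (nd (sqrt abar * \<rho> * z1) (1 - abar * \<rho>\<^sup>2) st) *
     ennreal (nd (0 + k * 1 * (st - sqrt abar * \<rho> * z1 - k * 0) / (1 - abar + k\<^sup>2 * 1)) (1 * (1 - abar) / (1 - abar + k\<^sup>2 * 1)) z2) \<partial>lborel)"
    by (intro nn_integral_cong) (simp add: ennreal_mult'[symmetric] pw)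
  also have "\<dots> = ennreal (nd (sqrt abar * \<rho> * z1) (1 - abar * \<rho>\<^sup>2) st)"
    by (subst nn_integral_cmult) (simp_all add: nd_nn wpos)
  finally show ?thesis .
qed

lemma cmult_lb:
  fixes f :: "real \<Rightarrow> ennreal"
  shows "f \<in> borel_measurable borel \<Longrightarrow> (\<integral>\<^sup>+x. c * f x \<partial>lborel) = c * (\<integral>\<^sup>+x. f x \<partial>lborel)"
  by (rule nn_integral_cmult) simp

lemma reorder_msy:
  fixes G :: "real \<times> real \<times> real \<Rightarrow> ennreal"
  assumes G: "G \<in> borel_measurable borel"
  shows "(\<integral>\<^sup>+m. \<integral>\<^sup>+s. \<integral>\<^sup>+y. G (s, y, m) \<partial>lborel \<partial>lborel \<partial>lborel) = (\<integral>\<^sup>+x. G x \<partial>lborel)"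
proof -
  have [measurable]: "G \<in> borel_measurable (borel \<Otimes>\<^sub>M (borel \<Otimes>\<^sub>M borel))"
    unfolding borel_prod by (rule G)
  have "(\<integral>\<^sup>+x. G x \<partial>lborel) = (\<integral>\<^sup>+s. \<integral>\<^sup>+y. \<integral>\<^sup>+m. G (s, y, m) \<partial>lborel \<partial>lborel \<partial>lborel)"
    by (rule nn3) (rule G)
  also have "\<dots> = (\<integral>\<^sup>+s. \<integral>\<^sup>+m. \<integral>\<^sup>+y. G (s, y, m) \<partial>lborel \<partial>lborel \<partial>lborel)"
  proof (rule nn_integral_cong)
    fix s show "(\<integral>\<^sup>+y. \<integral>\<^sup>+m. G (s, y, m) \<partial>lborel \<partial>lborel) = (\<integral>\<^sup>+m. \<integral>\<^sup>+y. G (s, y, m) \<partial>lborel \<partial>lborel)"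
      by (rule swap2) (unfold borel_prod[symmetric], measurable)
  qed
  also have "\<dots> = (\<integral>\<^sup>+m. \<integral>\<^sup>+s. \<integral>\<^sup>+y. G (s, y, m) \<partial>lborel \<partial>lborel \<partial>lborel)"
  proof (rule swap2)
    show "(\<lambda>p. \<integral>\<^sup>+y. G (fst p, y, snd p) \<partial>lborel) \<in> borel_measurable borel"
      unfolding borel_prod[symmetric] by (rule nn_lborel_meas) measurable
  qed
  finally show ?thesis ..
qed

lemma reorder_ysm:
  fixes G :: "real \<times> real \<times> real \<Rightarrow> ennreal"
  assumes G: "G \<in> borel_measurable borel"
  shows "(\<integral>\<^sup>+y. \<integral>\<^sup>+s. \<integral>\<^sup>+m. G (s, y, m) \<partial>lborel \<partial>lborel \<partial>lborel) = (\<integral>\<^sup>+x. G x \<partial>lborel)"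
proof -
  have [measurable]: "G \<in> borel_measurable (borel \<Otimes>\<^sub>M (borel \<Otimes>\<^sub>M borel))"
    unfolding borel_prod by (rule G)
  have "(\<integral>\<^sup>+x. G x \<partial>lborel) = (\<integral>\<^sup>+s. \<integral>\<^sup>+y. \<integral>\<^sup>+m. G (s, y, m) \<partial>lborel \<partial>lborel \<partial>lborel)"
    by (rule nn3) (rule G)
  also have "\<dots> = (\<integral>\<^sup>+y. \<integral>\<^sup>+s. \<integral>\<^sup>+m. G (s, y, m) \<partial>lborel \<partial>lborel \<partial>lborel)"
  proof (rule swap2)
    show "(\<lambda>p. \<integral>\<^sup>+m. G (fst p, snd p, m) \<partial>lborel) \<in> borel_measurable borel"
      unfolding borel_prod[symmetric] by (rule nn_lborel_meas) measurable
  qed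
  finally show ?thesis ..
qed

lemma sets_model[simp, measurable_cong]: "sets (model_law \<rho> abar \<beta>) = sets borel"
  unfolding model_law_def
  by (subst sets_bind[where N=borel]) (auto simp: space_bind sets_bind bivariate_std_normal_def)

lemma law3:
  assumes r: "\<bar>\<rho>\<bar> \<le> 1" and b: "0 < \<beta>" "\<beta> < 1" and ab: "0 < abar" "abar < 1"
  shows "distr (model_law \<rho> abar \<beta>) lborel (\<lambda>(m, s0, st, st1). (st, st1, m)) = density lborel (\<lambda>x. ennreal (phi \<rho> abar \<beta> x))"
proof (rule measure_eqI)
  fix A :: "(real \<times> real \<times> real) set"
  assume "A \<in> sets (distr (model_law \<rho> abar \<beta>) lborel (\<lambda>(m, s0, st, st1). (st, st1, m)))"
  then have A[measurable]: "A \<in> sets borel" by simp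
  define c where "c = sqrt (1 - \<rho>\<^sup>2)"
  define Q where "Q = (\<lambda>z1 z2 st st1. ennreal (nd 0 1 z1) * ennreal (nd 0 1 z2) *
     ennreal (nd (sqrt abar * (\<rho> * z1 + c * z2)) (1 - abar) st) *
     ennreal (nd (sqrt (1 - \<beta>) * st) \<beta> st1) * indicator A (st, st1, z1))"
  have Qm[measurable]: "(\<lambda>q. Q (fst q) (fst (snd q)) (fst (snd (snd q))) (snd (snd (snd q)))) \<in> borel_measurable borel"
    unfolding Q_def borel_prod[symmetric] by measurable
  have pi_m: "(\<lambda>(m::real, s0::real, st::real, st1::real). (st, st1, m)) \<in> measurable (model_law \<rho> abar \<beta>) lborel"
    unfolding split_beta' by (simp add: measurable_cong_sets[OF sets_model refl]) (unfold borel_prod[symmetric], measurable)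
  have "emeasure (distr (model_law \<rho> abar \<beta>) lborel (\<lambda>(m, s0, st, st1). (st, st1, m))) A
     = (\<integral>\<^sup>+x. indicator A x \<partial>distr (model_law \<rho> abar \<beta>) lborel (\<lambda>(m, s0, st, st1). (st, st1, m)))"
    by (subst nn_integral_indicator) simp_all
  also have "\<dots> = (\<integral>\<^sup>+x. indicator A ((\<lambda>(m, s0, st, st1). (st, st1, m)) x) \<partial>model_law \<rho> abar \<beta>)"
    by (rule nn_integral_distr[OF pi_m]) simp
  also have "\<dots> = (\<integral>\<^sup>+z1. \<integral>\<^sup>+z2. ennreal (nd 0 1 z1) * (ennreal (nd 0 1 z2) *
       (\<integral>\<^sup>+st. ennreal (nd (sqrt abar * (\<rho> * z1 + c * z2)) (1 - abar) st) *
          (\<integral>\<^sup>+st1. ennreal (nd (sqrt (1 - \<beta>) * st) \<beta> st1) *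
              indicator A (st, st1, z1) \<partial>lborel) \<partial>lborel)) \<partial>lborel \<partial>lborel)"
    unfolding c_def
    by (subst model_nn) (simp_all add: split_beta', unfold borel_prod[symmetric], measurable)
  also have "\<dots> = (\<integral>\<^sup>+z1. \<integral>\<^sup>+z2. \<integral>\<^sup>+st. \<integral>\<^sup>+st1. Q z1 z2 st st1 \<partial>lborel \<partial>lborel \<partial>lborel \<partial>lborel)"
  proof (intro nn_integral_cong)
    fix z1 z2
    have J[measurable]: "(\<lambda>st. \<integral>\<^sup>+st1. ennreal (nd (sqrt (1 - \<beta>) * st) \<beta> st1) * indicator A (st, st1, z1) \<partial>lborel) \<in> borel_measurable borel"
      by (rule nn_lborel_meas) measurable
    have in1: "(\<integral>\<^sup>+st1. Q z1 z2 st st1 \<partial>lborel) = (ennreal (nd 0 1 z1) * ennreal (nd 0 1 z2) * ennreal (nd (sqrt abar * (\<rho> * z1 + c * z2)) (1 - abar) st)) *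
        (\<integral>\<^sup>+st1. ennreal (nd (sqrt (1 - \<beta>) * st) \<beta> st1) * indicator A (st, st1, z1) \<partial>lborel)" for st
    proof -
      have "(\<integral>\<^sup>+st1. Q z1 z2 st st1 \<partial>lborel) = (\<integral>\<^sup>+st1. (ennreal (nd 0 1 z1) * ennreal (nd 0 1 z2) * ennreal (nd (sqrt abar * (\<rho> * z1 + c * z2)) (1 - abar) st)) *
        (ennreal (nd (sqrt (1 - \<beta>) * st) \<beta> st1) * indicator A (st, st1, z1)) \<partial>lborel)"
        by (simp add: Q_def mult.assoc)
      also have "\<dots> = (ennreal (nd 0 1 z1) * ennreal (nd 0 1 z2) * ennreal (nd (sqrt abar * (\<rho> * z1 + c * z2)) (1 - abar) st)) *
        (\<integral>\<^sup>+st1. ennreal (nd (sqrt (1 - \<beta>) * st) \<beta> st1) * indicator A (st, st1, z1) \<partial>lborel)"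
        by (rule cmult_lb) measurable
      finally show ?thesis .
    qed
    have "(\<integral>\<^sup>+st. \<integral>\<^sup>+st1. Q z1 z2 st st1 \<partial>lborel \<partial>lborel) = (\<integral>\<^sup>+st. (ennreal (nd 0 1 z1) * ennreal (nd 0 1 z2)) * (ennreal (nd (sqrt abar * (\<rho> * z1 + c * z2)) (1 - abar) st) *
        (\<integral>\<^sup>+st1. ennreal (nd (sqrt (1 - \<beta>) * st) \<beta> st1) * indicator A (st, st1, z1) \<partial>lborel)) \<partial>lborel)"
      by (simp add: in1 mult.assoc)
    also have "\<dots> = (ennreal (nd 0 1 z1) * ennreal (nd 0 1 z2)) * (\<integral>\<^sup>+st. ennreal (nd (sqrt abar * (\<rho> * z1 + c * z2)) (1 - abar) st) *
        (\<integral>\<^sup>+st1. ennreal (nd (sqrt (1 - \<beta>) * st) \<beta> st1) * indicator A (st, st1, z1) \<partial>lborel) \<partial>lborel)"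
      by (rule cmult_lb) measurable
    finally show "ennreal (nd 0 1 z1) * (ennreal (nd 0 1 z2) * (\<integral>\<^sup>+st. ennreal (nd (sqrt abar * (\<rho> * z1 + c * z2)) (1 - abar) st) *
        (\<integral>\<^sup>+st1. ennreal (nd (sqrt (1 - \<beta>) * st) \<beta> st1) * indicator A (st, st1, z1) \<partial>lborel) \<partial>lborel))
      = (\<integral>\<^sup>+st. \<integral>\<^sup>+st1. Q z1 z2 st st1 \<partial>lborel \<partial>lborel)"
      by (simp add: mult.assoc)
  qed
  also have "\<dots> = (\<integral>\<^sup>+z1. \<integral>\<^sup>+st. \<integral>\<^sup>+st1. \<integral>\<^sup>+z2. Q z1 z2 st st1 \<partial>lborel \<partial>lborel \<partial>lborel \<partial>lborel)"
  proof (rule nn_integral_cong)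
    fix z1
    have "(\<integral>\<^sup>+z2. \<integral>\<^sup>+st. \<integral>\<^sup>+st1. Q z1 z2 st st1 \<partial>lborel \<partial>lborel \<partial>lborel) = (\<integral>\<^sup>+st. \<integral>\<^sup>+z2. \<integral>\<^sup>+st1. Q z1 z2 st st1 \<partial>lborel \<partial>lborel \<partial>lborel)"
    proof (rule swap2)
      show "(\<lambda>p. \<integral>\<^sup>+st1. Q z1 (fst p) (snd p) st1 \<partial>lborel) \<in> borel_measurable borel"
        unfolding borel_prod[symmetric] by (rule nn_lborel_meas) (unfold Q_def, measurable)
    qed
    also have "\<dots> = (\<integral>\<^sup>+st. \<integral>\<^sup>+st1. \<integral>\<^sup>+z2. Q z1 z2 st st1 \<partial>lborel \<partial>lborel \<partial>lborel)"
    proof (rule nn_integral_cong)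
      fix st show "(\<integral>\<^sup>+z2. \<integral>\<^sup>+st1. Q z1 z2 st st1 \<partial>lborel \<partial>lborel) = (\<integral>\<^sup>+st1. \<integral>\<^sup>+z2. Q z1 z2 st st1 \<partial>lborel \<partial>lborel)"
        by (rule swap2) (unfold Q_def borel_prod[symmetric], measurable)
    qed
    finally show "(\<integral>\<^sup>+z2. \<integral>\<^sup>+st. \<integral>\<^sup>+st1. Q z1 z2 st st1 \<partial>lborel \<partial>lborel \<partial>lborel) = (\<integral>\<^sup>+st. \<integral>\<^sup>+st1. \<integral>\<^sup>+z2. Q z1 z2 st st1 \<partial>lborel \<partial>lborel \<partial>lborel)" .
  qed
  also have "\<dots> = (\<integral>\<^sup>+z1. \<integral>\<^sup>+st. \<integral>\<^sup>+st1. ennreal (phi \<rho> abar \<beta> (st, st1, z1)) * indicator A (st, st1, z1) \<partial>lborel \<partial>lborel \<partial>lborel)"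
  proof (intro nn_integral_cong)
    fix z1 st st1
    have "(\<integral>\<^sup>+z2. Q z1 z2 st st1 \<partial>lborel) = (\<integral>\<^sup>+z2. (ennreal (nd 0 1 z1) * ennreal (nd (sqrt (1 - \<beta>) * st) \<beta> st1) * indicator A (st, st1, z1)) *
       (ennreal (nd 0 1 z2) * ennreal (nd (sqrt abar * (\<rho> * z1 + sqrt (1 - \<rho>\<^sup>2) * z2)) (1 - abar) st)) \<partial>lborel)"
      by (intro nn_integral_cong) (simp add: Q_def c_def ac_simps)
    also have "\<dots> = (ennreal (nd 0 1 z1) * ennreal (nd (sqrt (1 - \<beta>) * st) \<beta> st1) * indicator A (st, st1, z1)) *
       (\<integral>\<^sup>+z2. ennreal (nd 0 1 z2) * ennreal (nd (sqrt abar * (\<rho> * z1 + sqrt (1 - \<rho>\<^sup>2) * z2)) (1 - abar) st) \<partial>lborel)"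
      by (rule cmult_lb) measurable
    also have "\<dots> = (ennreal (nd 0 1 z1) * ennreal (nd (sqrt (1 - \<beta>) * st) \<beta> st1) * indicator A (st, st1, z1)) *
       ennreal (nd (sqrt abar * \<rho> * z1) (1 - abar * \<rho>\<^sup>2) st)"
      by (simp add: conv_z2 ab r)
    also have "\<dots> = ennreal (phi \<rho> abar \<beta> (st, st1, z1)) * indicator A (st, st1, z1)"
      by (simp add: phi_def ennreal_mult' ac_simps)
    finally show "(\<integral>\<^sup>+z2. Q z1 z2 st st1 \<partial>lborel) = ennreal (phi \<rho> abar \<beta> (st, st1, z1)) * indicator A (st, st1, z1)" .
  qed
  also have "\<dots> = (\<integral>\<^sup>+x. ennreal (phi \<rho> abar \<beta> x) * indicator A x \<partial>lborel)"
    by (rule reorder_msy) measurable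
  also have "\<dots> = emeasure (density lborel (\<lambda>x. ennreal (phi \<rho> abar \<beta> x))) A"
    by (subst emeasure_density) simp_all
  finally show "emeasure (distr (model_law \<rho> abar \<beta>) lborel (\<lambda>(m, s0, st, st1). (st, st1, m))) A = emeasure (density lborel (\<lambda>x. ennreal (phi \<rho> abar \<beta> x))) A" .
qed simp

locale kset =
  fixes \<rho> abar \<beta> :: real
  assumes r: "\<bar>\<rho>\<bar> \<le> 1" and b0: "0 < \<beta>" and b1: "\<beta> < 1" and a0: "0 < abar" and a1: "abar < 1"
begin

definition "a = sqrt abar"
definition "bb = sqrt (1 - \<beta>)"
definition "d = abar * \<rho>\<^sup>2"
definition "D = \<beta> + bb\<^sup>2 * (1 - d)"
definition "v1 = (1 - d) * \<beta> / D"
definition "mu1 y m = a * \<rho> * m + bb * (1 - d) * (y - 0 - bb * (a * \<rho> * m)) / D"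

lemma r2: "\<rho>\<^sup>2 \<le> 1" using r by (simp add: abs_square_le_1)
lemma d0: "0 \<le> d" unfolding d_def using a0 by simp
lemma d1: "d < 1"
proof -
  have "abar * \<rho>\<^sup>2 \<le> abar" using mult_left_mono[OF r2, of abar] a0 by simp
  then show ?thesis unfolding d_def using a1 by linarith
qed
lemma a2: "a\<^sup>2 = abar" unfolding a_def using a0 by simp
lemma bb2: "bb\<^sup>2 = 1 - \<beta>" unfolding bb_def using b1 by simp
lemma D_eq: "D = 1 - d + \<beta> * d" unfolding D_def bb2 by (simp add: algebra_simps)
lemma D0: "0 < D" unfolding D_def bb2 using b0 b1 d1 by (simp add: add_pos_nonneg)
lemma v10: "0 < v1" unfolding v1_def using D0 d1 b0 by simp
lemma ad: "(a * \<rho>)\<^sup>2 = d" unfolding d_def using a2 by (simp add: power_mult_distrib)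

lemma phi_F1: "phi \<rho> abar \<beta> (s, y, m) = nd 0 1 m * nd (bb * (a * \<rho> * m)) D y * nd (mu1 y m) v1 s"
proof -
  have "nd (a * \<rho> * m) (1 - d) s * nd (0 + bb * s) \<beta> y =
    nd (0 + bb * (a * \<rho> * m)) (\<beta> + bb\<^sup>2 * (1 - d)) y *
    nd (a * \<rho> * m + bb * (1 - d) * (y - 0 - bb * (a * \<rho> * m)) / (\<beta> + bb\<^sup>2 * (1 - d))) ((1 - d) * \<beta> / (\<beta> + bb\<^sup>2 * (1 - d))) s"
    by (rule gp) (use d1 b0 in auto)
  then show ?thesis
    unfolding phi_def mu1_def v1_def D_def[symmetric] by (simp add: a_def bb_def d_def mult.assoc)
qed

lemma phi_F2: "phi \<rho> abar \<beta> (s, y, m) = nd 0 1 y * nd (bb * y) \<beta> s * nd (a * \<rho> * s) (1 - d) m"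
proof -
  have "nd 0 1 m * nd (0 + (a * \<rho>) * m) (1 - d) s =
    nd (0 + (a * \<rho>) * 0) ((1 - d) + (a * \<rho>)\<^sup>2 * 1) s *
    nd (0 + (a * \<rho>) * 1 * (s - 0 - (a * \<rho>) * 0) / ((1 - d) + (a * \<rho>)\<^sup>2 * 1)) (1 * (1 - d) / ((1 - d) + (a * \<rho>)\<^sup>2 * 1)) m"
    by (rule gp) (use d1 in auto)
  then have e1: "nd 0 1 m * nd (a * \<rho> * m) (1 - d) s = nd 0 1 s * nd (a * \<rho> * s) (1 - d) m"
    unfolding ad by simp
  have "nd 0 1 s * nd (0 + bb * s) \<beta> y =
    nd (0 + bb * 0) (\<beta> + bb\<^sup>2 * 1) y *
    nd (0 + bb * 1 * (y - 0 - bb * 0) / (\<beta> + bb\<^sup>2 * 1)) (1 * \<beta> / (\<beta> + bb\<^sup>2 * 1)) s"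
    by (rule gp) (use b0 in auto)
  then have e2: "nd 0 1 s * nd (bb * s) \<beta> y = nd 0 1 y * nd (bb * y) \<beta> s"
    unfolding bb2 by simp
  have "phi \<rho> abar \<beta> (s, y, m) = (nd 0 1 m * nd (a * \<rho> * m) (1 - d) s) * nd (bb * s) \<beta> y"
    unfolding phi_def by (simp add: a_def bb_def d_def)
  also have "\<dots> = (nd 0 1 s * nd (bb * s) \<beta> y) * nd (a * \<rho> * s) (1 - d) m"
    unfolding e1 by (simp add: ac_simps)
  also have "\<dots> = nd 0 1 y * nd (bb * y) \<beta> s * nd (a * \<rho> * s) (1 - d) m"
    unfolding e2 ..
  finally show ?thesis .
qed

lemma int_s: "(\<integral>s. phi \<rho> abar \<beta> (s, y, m) \<partial>lborel) = nd 0 1 m * nd (bb * (a * \<rho> * m)) D y"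
  unfolding phi_F1 using v10 by (simp add: nd_int)

lemma int_m: "(\<integral>m. phi \<rho> abar \<beta> (s, y, m) \<partial>lborel) = nd 0 1 y * nd (bb * y) \<beta> s"
  unfolding phi_F2 using d1 by (simp add: nd_int)

lemma int_sm: "(\<integral>s. nd 0 1 y * nd (bb * y) \<beta> s \<partial>lborel) = nd 0 1 y"
  using b0 by (simp add: nd_int)

end

lemma int_lborel_meas:
  fixes f :: "'a \<Rightarrow> real \<Rightarrow> real"
  assumes "(\<lambda>p. f (fst p) (snd p)) \<in> borel_measurable (N \<Otimes>\<^sub>M borel)"
  shows "(\<lambda>x. \<integral>y. f x y \<partial>lborel) \<in> borel_measurable N"
proof -
  have "case_prod f \<in> borel_measurable (N \<Otimes>\<^sub>M lborel)"
    using assms by (simp add: case_prod_beta' measurable_cong_sets[OF sets_pair_measure_cong[OF refl sets_lborel] refl])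
  then show ?thesis by (rule lborel.borel_measurable_lebesgue_integral)
qed

lemma phi_nonneg[simp]: "0 \<le> phi \<rho> abar \<beta> x"
  unfolding phi_def by (auto split: prod.splits)

context kset begin

definition "Kc y m = (ln (\<beta> / v1) + (v1 + (mu1 y m - bb * y)\<^sup>2) / \<beta> - 1) / 2"

lemma slice_kl:
  fixes f :: "real \<times> real \<times> real \<Rightarrow> ennreal"
  assumes fm: "f \<in> borel_measurable borel"
  and H1: "AE s in lborel. f (s, y, m) = ennreal (phi \<rho> abar \<beta> (s, y, m))"
  and H2: "AE s in lborel. AE m' in lborel. f (s, y, m') = ennreal (phi \<rho> abar \<beta> (s, y, m'))"
  shows "kl_div (\<lambda>st. cond_dens_full f st y m) (\<lambda>st. cond_dens_marg f st y) = Kc y m"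
proof -
  have fm3[measurable]: "f \<in> borel_measurable (borel \<Otimes>\<^sub>M (borel \<Otimes>\<^sub>M borel))"
    unfolding borel_prod by (rule fm)
  have Mm[measurable]: "(\<lambda>s. \<integral>m'. enn2real (f (s, y, m')) \<partial>lborel) \<in> borel_measurable borel"
    by (rule int_lborel_meas) measurable
  define Z where "Z = nd 0 1 m * nd (bb * (a * \<rho> * m)) D y"
  have Z0: "0 < Z" unfolding Z_def using D0 by (simp add: nd_pos)
  have Zf: "(\<integral>s. enn2real (f (s, y, m)) \<partial>lborel) = Z"
  proof -
    have "(\<integral>s. enn2real (f (s, y, m)) \<partial>lborel) = (\<integral>s. phi \<rho> abar \<beta> (s, y, m) \<partial>lborel)"
      by (rule integral_cong_AE) (use H1 in \<open>auto elim!: eventually_mono\<close>)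
    then show ?thesis unfolding int_s Z_def .
  qed
  have Mf: "AE s in lborel. (\<integral>m'. enn2real (f (s, y, m')) \<partial>lborel) = nd 0 1 y * nd (bb * y) \<beta> s"
    using H2
  proof (rule eventually_mono)
    fix s assume "AE m' in lborel. f (s, y, m') = ennreal (phi \<rho> abar \<beta> (s, y, m'))"
    then have "(\<integral>m'. enn2real (f (s, y, m')) \<partial>lborel) = (\<integral>m'. phi \<rho> abar \<beta> (s, y, m') \<partial>lborel)"
      by (intro integral_cong_AE) (auto elim!: eventually_mono)
    then show "(\<integral>m'. enn2real (f (s, y, m')) \<partial>lborel) = nd 0 1 y * nd (bb * y) \<beta> s"
      unfolding int_m .
  qed
  have Wf: "(\<integral>s. (\<integral>m'. enn2real (f (s, y, m')) \<partial>lborel) \<partial>lborel) = nd 0 1 y"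
  proof -
    have "(\<integral>s. (\<integral>m'. enn2real (f (s, y, m')) \<partial>lborel) \<partial>lborel) = (\<integral>s. nd 0 1 y * nd (bb * y) \<beta> s \<partial>lborel)"
      by (rule integral_cong_AE) (use Mf in auto)
    then show ?thesis unfolding int_sm .
  qed
  have Y0: "0 < nd 0 1 y" by (simp add: nd_pos)
  have cf: "AE s in lborel. cond_dens_full f s y m = nd (mu1 y m) v1 s"
    using H1
  proof (rule eventually_mono)
    fix s assume "f (s, y, m) = ennreal (phi \<rho> abar \<beta> (s, y, m))"
    then show "cond_dens_full f s y m = nd (mu1 y m) v1 s"
      unfolding cond_dens_full_def Zf using Z0 by (simp add: phi_F1 Z_def[symmetric])
  qed
  have cm: "AE s in lborel. cond_dens_marg f s y = nd (bb * y) \<beta> s"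
    using Mf
  proof (rule eventually_mono)
    fix s assume "(\<integral>m'. enn2real (f (s, y, m')) \<partial>lborel) = nd 0 1 y * nd (bb * y) \<beta> s"
    then show "cond_dens_marg f s y = nd (bb * y) \<beta> s"
      unfolding cond_dens_marg_def Wf using Y0 by simp
  qed
  have "kl_div (\<lambda>st. cond_dens_full f st y m) (\<lambda>st. cond_dens_marg f st y) =
     (\<integral>s. nd (mu1 y m) v1 s * ln (nd (mu1 y m) v1 s / nd (bb * y) \<beta> s) \<partial>lborel)"
    unfolding kl_div_def
  proof (rule integral_cong_AE)
    show "(\<lambda>s. cond_dens_full f s y m * ln (cond_dens_full f s y m / cond_dens_marg f s y)) \<in> borel_measurable lborel"
      unfolding cond_dens_full_def cond_dens_marg_def by measurable
  next
    have "AE s in lborel. cond_dens_full f s y m = nd (mu1 y m) v1 s \<and> cond_dens_marg f s y = nd (bb * y) \<beta> s"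
      using cf cm by eventually_elim auto
    then show "AE s in lborel. cond_dens_full f s y m * ln (cond_dens_full f s y m / cond_dens_marg f s y) =
      nd (mu1 y m) v1 s * ln (nd (mu1 y m) v1 s / nd (bb * y) \<beta> s)"
      by (rule eventually_mono) simp
  qed simp
  also have "\<dots> = Kc y m"
    unfolding Kc_def by (rule kl_gauss[OF v10 b0])
  finally show ?thesis .
qed

end

lemma ineq_main:
  fixes d \<beta> :: real
  assumes d0: "0 \<le> d" and d1: "d < 1" and b0: "0 < \<beta>" and b1: "\<beta> < 1"
  shows "ln ((1 - d + \<beta> * d) / (1 - d)) + (1 - d) / (1 - d + \<beta> * d) - 1 \<ge> - (ln (1 - \<beta> * d) + \<beta> * d)"
proof -
  define c where "c = \<beta> * d"
  have c0: "0 \<le> c" and cd: "c \<le> d" unfolding c_def using d0 b0 b1 by (auto intro: mult_left_le_one_le)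
  have c1: "c < 1" using cd d1 by simp
  define r where "r = (1 - d + c) / (1 - d)"
  define r0 where "r0 = 1 / (1 - c)"
  have r_pos: "0 < r" unfolding r_def using d1 c0 by simp
  have r0_pos: "0 < r0" unfolding r0_def using c1 by simp
  have "ln (r0 / r) \<le> r0 / r - 1" by (rule ln_le_minus_one) (use r_pos r0_pos in simp)
  then have l1: "ln r \<ge> ln r0 - r0 / r + 1" using r_pos r0_pos by (simp add: ln_div)
  have lr0: "ln r0 = - ln (1 - c)" unfolding r0_def using c1 by (simp add: ln_div)
  have inv: "1 / r = (1 - d) / (1 - d + c)" unfolding r_def by simp
  have key: "(r0 - 1) / r \<le> c"
  proof -
    have "(r0 - 1) / r = c * (1 - d) / ((1 - c) * (1 - d + c))"
      unfolding r0_def r_def using c1 d1 c0 by (simp add: field_simps)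
    also have "\<dots> \<le> c"
    proof -
      have "(1 - d) \<le> (1 - c) * (1 - d + c)"
      proof -
        have "(1 - c) * (1 - d + c) - (1 - d) = c * (d - c)" by (simp add: algebra_simps)
        moreover have "c * (d - c) \<ge> 0" using c0 cd by simp
        ultimately show ?thesis by linarith
      qed
      then have "c * (1 - d) \<le> c * ((1 - c) * (1 - d + c))" using mult_left_mono c0 by blast
      moreover have "0 < (1 - c) * (1 - d + c)" using c1 d1 c0 by simp
      ultimately show ?thesis by (simp add: divide_le_eq)
    qed
    finally show ?thesis .
  qed
  have "ln r + (1 - d) / (1 - d + c) - 1 \<ge> - (ln (1 - c) + c)"
  proof -
    have "ln r + 1 / r - 1 \<ge> ln r0 - r0 / r + 1 / r" using l1 by linarith
    moreover have "ln r0 - r0 / r + 1 / r = - ln (1 - c) - (r0 - 1) / r"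
      using lr0 by (simp add: diff_divide_distrib)
    ultimately show ?thesis using key inv by linarith
  qed
  then show ?thesis unfolding r_def c_def .
qed

context kset begin

definition "K0 = (ln (\<beta> / v1) + v1 / \<beta> - 1) / 2"
definition "A1 = bb * (1 - d) / D - bb"
definition "A2 = a * \<rho> - bb * (1 - d) * (bb * (a * \<rho>)) / D"

lemma mu1_lin: "mu1 y m - bb * y = A1 * y + A2 * m"
  unfolding mu1_def A1_def A2_def using D0 by (simp add: field_simps)

lemma Kc_eq: "Kc y m = K0 + (A1 * y + A2 * m)\<^sup>2 / (2 * \<beta>)"
  unfolding Kc_def K0_def mu1_lin[symmetric] using b0 by (simp add: field_simps)

lemma K0_lower: "K0 \<ge> - (1/2) * (ln (1 - \<beta> * abar * \<rho>\<^sup>2) + \<beta> * abar * \<rho>\<^sup>2)"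
proof -
  have nz: "1 - d \<noteq> 0" "\<beta> \<noteq> 0" "D \<noteq> 0" using d1 b0 D0 by auto
  have bv: "\<beta> / v1 = (1 - d + \<beta> * d) / (1 - d)" unfolding v1_def D_eq[symmetric] using nz by (simp add: field_simps)
  have vb: "v1 / \<beta> = (1 - d) / (1 - d + \<beta> * d)" unfolding v1_def D_eq[symmetric] using nz by (simp add: field_simps)
  have e: "\<beta> * abar * \<rho>\<^sup>2 = \<beta> * d" unfolding d_def by simp
  have aux: "\<And>u X::real. - u \<le> X \<Longrightarrow> - (1/2) * u \<le> X / 2" by simp
  show ?thesis unfolding K0_def bv vb e by (rule aux) (rule ineq_main[OF d0 d1 b0 b1])
qed

lemma Kc_lower: "Kc y m \<ge> - (1/2) * (ln (1 - \<beta> * abar * \<rho>\<^sup>2) + \<beta> * abar * \<rho>\<^sup>2)"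
proof -
  have "(A1 * y + A2 * m)\<^sup>2 / (2 * \<beta>) \<ge> 0" using b0 by simp
  then show ?thesis unfolding Kc_eq using K0_lower by linarith
qed

lemma Kc_bound: "\<bar>Kc y m\<bar> \<le> \<bar>K0\<bar> + (A1\<^sup>2 / \<beta>) * y\<^sup>2 + (A2\<^sup>2 / \<beta>) * m\<^sup>2"
proof -
  have sq: "(A1 * y + A2 * m)\<^sup>2 \<le> 2 * (A1\<^sup>2 * y\<^sup>2) + 2 * (A2\<^sup>2 * m\<^sup>2)"
  proof -
    have "0 \<le> (A1 * y - A2 * m)\<^sup>2" by simp
    then show ?thesis by (simp add: power2_eq_square algebra_simps)
  qed
  have "(A1 * y + A2 * m)\<^sup>2 / (2 * \<beta>) \<le> (2 * (A1\<^sup>2 * y\<^sup>2) + 2 * (A2\<^sup>2 * m\<^sup>2)) / (2 * \<beta>)"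
    using sq b0 by (simp add: divide_right_mono)
  also have "\<dots> = (A1\<^sup>2 / \<beta>) * y\<^sup>2 + (A2\<^sup>2 / \<beta>) * m\<^sup>2" using b0 by (simp add: field_simps)
  finally have "(A1 * y + A2 * m)\<^sup>2 / (2 * \<beta>) \<le> (A1\<^sup>2 / \<beta>) * y\<^sup>2 + (A2\<^sup>2 / \<beta>) * m\<^sup>2" .
  moreover have "(A1 * y + A2 * m)\<^sup>2 / (2 * \<beta>) \<ge> 0" using b0 by simp
  ultimately show ?thesis unfolding Kc_eq by linarith
qed

lemma nn_nd_c: "0 < v \<Longrightarrow> 0 \<le> c \<Longrightarrow> (\<integral>\<^sup>+w. ennreal (c * nd \<mu> v w) \<partial>lborel) = ennreal c"
  by (simp add: ennreal_mult' cmult_lb nd_nn)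

lemma moment_m: "(\<integral>\<^sup>+x. ennreal (phi \<rho> abar \<beta> x * (snd (snd x))\<^sup>2) \<partial>lborel) = 1"
proof -
  have "(\<integral>\<^sup>+x. ennreal (phi \<rho> abar \<beta> x * (snd (snd x))\<^sup>2) \<partial>lborel)
     = (\<integral>\<^sup>+m. \<integral>\<^sup>+s. \<integral>\<^sup>+y. ennreal (phi \<rho> abar \<beta> (s, y, m) * m\<^sup>2) \<partial>lborel \<partial>lborel \<partial>lborel)"
  proof -
    have "(\<lambda>x. ennreal (phi \<rho> abar \<beta> x * (snd (snd x))\<^sup>2)) \<in> borel_measurable (borel \<Otimes>\<^sub>M (borel \<Otimes>\<^sub>M borel))"
      using phi_meas[of \<rho> abar \<beta>] unfolding borel_prod[symmetric] by measurable
    then have "(\<lambda>x. ennreal (phi \<rho> abar \<beta> x * (snd (snd x))\<^sup>2)) \<in> borel_measurable borel"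
      by (simp only: borel_prod)
    from reorder_msy[OF this] show ?thesis by simp
  qed
  also have "\<dots> = (\<integral>\<^sup>+m. \<integral>\<^sup>+s. ennreal ((nd 0 1 m * m\<^sup>2) * nd (a * \<rho> * m) (1 - d) s) \<partial>lborel \<partial>lborel)"
  proof (intro nn_integral_cong)
    fix m s
    have "(\<integral>\<^sup>+y. ennreal (phi \<rho> abar \<beta> (s, y, m) * m\<^sup>2) \<partial>lborel) =
      (\<integral>\<^sup>+y. ennreal ((nd 0 1 m * m\<^sup>2 * nd (a * \<rho> * m) (1 - d) s) * nd (bb * s) \<beta> y) \<partial>lborel)"
      by (intro nn_integral_cong) (simp add: phi_def a_def bb_def d_def ac_simps)
    also have "\<dots> = ennreal ((nd 0 1 m * m\<^sup>2) * nd (a * \<rho> * m) (1 - d) s)"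
      using b0 by (subst nn_nd_c) (simp_all add: ac_simps)
    finally show "(\<integral>\<^sup>+y. ennreal (phi \<rho> abar \<beta> (s, y, m) * m\<^sup>2) \<partial>lborel) = ennreal ((nd 0 1 m * m\<^sup>2) * nd (a * \<rho> * m) (1 - d) s)" .
  qed
  also have "\<dots> = (\<integral>\<^sup>+m. ennreal (nd 0 1 m * m\<^sup>2) \<partial>lborel)"
    using d1 by (intro nn_integral_cong) (simp add: nn_nd_c)
  also have "\<dots> = 1" by (rule nd_moment2)
  finally show ?thesis .
qed

lemma moment_y: "(\<integral>\<^sup>+x. ennreal (phi \<rho> abar \<beta> x * (fst (snd x))\<^sup>2) \<partial>lborel) = 1"
proof -
  have "(\<integral>\<^sup>+x. ennreal (phi \<rho> abar \<beta> x * (fst (snd x))\<^sup>2) \<partial>lborel)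
     = (\<integral>\<^sup>+y. \<integral>\<^sup>+s. \<integral>\<^sup>+m. ennreal (phi \<rho> abar \<beta> (s, y, m) * y\<^sup>2) \<partial>lborel \<partial>lborel \<partial>lborel)"
  proof -
    have "(\<lambda>x. ennreal (phi \<rho> abar \<beta> x * (fst (snd x))\<^sup>2)) \<in> borel_measurable (borel \<Otimes>\<^sub>M (borel \<Otimes>\<^sub>M borel))"
      using phi_meas[of \<rho> abar \<beta>] unfolding borel_prod[symmetric] by measurable
    then have "(\<lambda>x. ennreal (phi \<rho> abar \<beta> x * (fst (snd x))\<^sup>2)) \<in> borel_measurable borel"
      by (simp only: borel_prod)
    from reorder_ysm[OF this] show ?thesis by simp
  qed
  also have "\<dots> = (\<integral>\<^sup>+y. \<integral>\<^sup>+s. ennreal ((nd 0 1 y * y\<^sup>2) * nd (bb * y) \<beta> s) \<partial>lborel \<partial>lborel)"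
  proof (intro nn_integral_cong)
    fix y s
    have "(\<integral>\<^sup>+m. ennreal (phi \<rho> abar \<beta> (s, y, m) * y\<^sup>2) \<partial>lborel) =
      (\<integral>\<^sup>+m. ennreal ((nd 0 1 y * y\<^sup>2 * nd (bb * y) \<beta> s) * nd (a * \<rho> * s) (1 - d) m) \<partial>lborel)"
      by (intro nn_integral_cong) (simp add: phi_F2 ac_simps)
    also have "\<dots> = ennreal ((nd 0 1 y * y\<^sup>2) * nd (bb * y) \<beta> s)"
      using d1 by (subst nn_nd_c) (simp_all add: ac_simps)
    finally show "(\<integral>\<^sup>+m. ennreal (phi \<rho> abar \<beta> (s, y, m) * y\<^sup>2) \<partial>lborel) = ennreal ((nd 0 1 y * y\<^sup>2) * nd (bb * y) \<beta> s)" .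
  qed
  also have "\<dots> = (\<integral>\<^sup>+y. ennreal (nd 0 1 y * y\<^sup>2) \<partial>lborel)"
    using b0 by (intro nn_integral_cong) (simp add: nn_nd_c)
  also have "\<dots> = 1" by (rule nd_moment2)
  finally show ?thesis .
qed

end

theorem corollary1:
  fixes \<Omega> :: "'a measure"
    and XM XS0 XSt XSt1 :: "'a \<Rightarrow> real"
    and f :: "real \<times> real \<times> real \<Rightarrow> ennreal"
    and \<rho> abar \<beta> :: real
  assumes "prob_space \<Omega>"
    and "XM \<in> borel_measurable \<Omega>" "XS0 \<in> borel_measurable \<Omega>"
    and "XSt \<in> borel_measurable \<Omega>" "XSt1 \<in> borel_measurable \<Omega>"
    and "\<bar>\<rho>\<bar> \<le> 1"
    and "0 < \<beta>" "\<beta> < 1" "0 < abar" "abar < 1"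
    and "distr \<Omega> borel (\<lambda>\<omega>. (XM \<omega>, XS0 \<omega>, XSt \<omega>, XSt1 \<omega>)) = model_law \<rho> abar \<beta>"
    and "distributed \<Omega> lborel (\<lambda>\<omega>. (XSt \<omega>, XSt1 \<omega>, XM \<omega>)) f"
  shows "(\<integral>\<omega>. kl_div (\<lambda>st. cond_dens_full f st (XSt1 \<omega>) (XM \<omega>))
                     (\<lambda>st. cond_dens_marg f st (XSt1 \<omega>)) \<partial>\<Omega>)
         \<ge> - (1/2) * (ln (1 - \<beta> * abar * \<rho>\<^sup>2) + \<beta> * abar * \<rho>\<^sup>2)"
proof -
  interpret kset \<rho> abar \<beta> using assms(6-10) by unfold_locales auto
  interpret P: prob_space \<Omega> by (rule assms(1))
  note XM[measurable] = assms(2) and XS0[measurable] = assms(3) and XSt[measurable] = assms(4) and XSt1[measurable] = assms(5)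
  define RHS where "RHS = - (1/2) * (ln (1 - \<beta> * abar * \<rho>\<^sup>2) + \<beta> * abar * \<rho>\<^sup>2)"
  define T3 where "T3 = (\<lambda>\<omega>. (XSt \<omega>, XSt1 \<omega>, XM \<omega>))"
  define T4 where "T4 = (\<lambda>\<omega>. (XM \<omega>, XS0 \<omega>, XSt \<omega>, XSt1 \<omega>))"
  define \<pi> :: "real \<times> real \<times> real \<times> real \<Rightarrow> real \<times> real \<times> real" where "\<pi> = (\<lambda>(m, s0, st, st1). (st, st1, m))"
  have T4m: "T4 \<in> measurable \<Omega> borel" unfolding T4_def by measurable
  have T3m: "T3 \<in> measurable \<Omega> lborel" unfolding T3_def by simp
  have T3b: "T3 \<in> measurable \<Omega> borel" using T3m by simp
  have \<pi>m: "\<pi> \<in> measurable borel lborel"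
    unfolding \<pi>_def split_beta' by simp (unfold borel_prod[symmetric], measurable)
  have law: "distr \<Omega> lborel T3 = density lborel (\<lambda>x. ennreal (phi \<rho> abar \<beta> x))"
  proof -
    have "T3 = \<pi> \<circ> T4" by (auto simp: T3_def T4_def \<pi>_def)
    then have "distr \<Omega> lborel T3 = distr (distr \<Omega> borel T4) lborel \<pi>"
      using distr_distr[OF \<pi>m T4m] by simp
    also have "\<dots> = distr (model_law \<rho> abar \<beta>) lborel \<pi>"
      using assms(11) unfolding T4_def by simp
    also have "\<dots> = density lborel (\<lambda>x. ennreal (phi \<rho> abar \<beta> x))"
      unfolding \<pi>_def by (rule law3) (use assms(6-10) in auto)
    finally show ?thesis .
  qed
  have fm: "f \<in> borel_measurable borel"
    using assms(12) by (simp add: distributed_def)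
  have fden: "distr \<Omega> lborel T3 = density lborel f"
    using assms(12) by (simp add: distributed_def T3_def)
  have aef: "AE x in lborel. f x = ennreal (phi \<rho> abar \<beta> x)"
    by (rule sigma_finite_measure.density_unique[OF lborel.sigma_finite_measure_axioms]) (use fm fden law in simp_all)
  have fm3[measurable]: "f \<in> borel_measurable (borel \<Otimes>\<^sub>M (borel \<Otimes>\<^sub>M borel))"
    unfolding borel_prod by (rule fm)
  have phim3[measurable]: "phi \<rho> abar \<beta> \<in> borel_measurable (borel \<Otimes>\<^sub>M (borel \<Otimes>\<^sub>M borel))"
    unfolding borel_prod by (rule phi_meas)
  have A1: "AE y in lborel. AE m in lborel. AE s in lborel. f (s, y, m) = ennreal (phi \<rho> abar \<beta> (s, y, m))"
    by (rule ae3_split[OF _ aef]) (unfold borel_prod[symmetric], measurable)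
  have A2: "AE y in lborel. AE s in lborel. AE m in lborel. f (s, y, m) = ennreal (phi \<rho> abar \<beta> (s, y, m))"
    using A1
  proof (rule eventually_mono)
    fix y assume "AE m in lborel. AE s in lborel. f (s, y, m) = ennreal (phi \<rho> abar \<beta> (s, y, m))"
    then show "AE s in lborel. AE m in lborel. f (s, y, m) = ennreal (phi \<rho> abar \<beta> (s, y, m))"
      by (subst ae_swap) (unfold borel_prod[symmetric], measurable)
  qed
  define g where "g y m = kl_div (\<lambda>st. cond_dens_full f st y m) (\<lambda>st. cond_dens_marg f st y)" for y m
  have G: "AE y in lborel. AE m in lborel. g y m = Kc y m"
    using A1 A2
  proof eventually_elim
    case (elim y)
    show ?case using elim(1)
    proof (rule eventually_mono)
      fix m assume "AE s in lborel. f (s, y, m) = ennreal (phi \<rho> abar \<beta> (s, y, m))"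
      then show "g y m = Kc y m" unfolding g_def by (rule slice_kl[OF fm _ elim(2)])
    qed
  qed
  define Zf where "Zf p = (\<integral>s. enn2real (f (s, fst p, snd p)) \<partial>lborel)" for p :: "real \<times> real"
  define Mf where "Mf p = (\<integral>m'. enn2real (f (fst p, snd p, m')) \<partial>lborel)" for p :: "real \<times> real"
  define Wf where "Wf y = (\<integral>s. Mf (s, y) \<partial>lborel)" for y
  have Zm[measurable]: "Zf \<in> borel_measurable (borel \<Otimes>\<^sub>M borel)"
    unfolding Zf_def[abs_def] by (rule int_lborel_meas) measurable
  have Mm[measurable]: "Mf \<in> borel_measurable (borel \<Otimes>\<^sub>M borel)"
    unfolding Mf_def[abs_def] by (rule int_lborel_meas) measurable
  have Wm[measurable]: "Wf \<in> borel_measurable borel"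
    unfolding Wf_def[abs_def] by (rule int_lborel_meas) measurable
  have g_alt: "g y m = (\<integral>s. (enn2real (f (s, y, m)) / Zf (y, m)) * ln ((enn2real (f (s, y, m)) / Zf (y, m)) / (Mf (s, y) / Wf y)) \<partial>lborel)" for y m
    unfolding g_def kl_div_def cond_dens_full_def cond_dens_marg_def Zf_def Mf_def Wf_def by simp
  have gm[measurable]: "(\<lambda>p. g (fst p) (snd p)) \<in> borel_measurable (borel \<Otimes>\<^sub>M borel)"
    unfolding g_alt by (rule int_lborel_meas) measurable
  have Kcm[measurable]: "(\<lambda>p. Kc (fst p) (snd p)) \<in> borel_measurable (borel \<Otimes>\<^sub>M borel)"
    unfolding Kc_eq by measurable
  have Qp: "Measurable.pred borel (\<lambda>p::real \<times> real. g (fst p) (snd p) = Kc (fst p) (snd p))"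
    unfolding borel_prod[symmetric] by measurable
  have "AE x in (lborel :: (real \<times> real \<times> real) measure). g (fst (snd x)) (snd (snd x)) = Kc (fst (snd x)) (snd (snd x))"
    using ae3_join[OF Qp] G by simp
  then have "AE x in density lborel (\<lambda>x. ennreal (phi \<rho> abar \<beta> x)). g (fst (snd x)) (snd (snd x)) = Kc (fst (snd x)) (snd (snd x))"
    by (subst AE_density) (auto elim!: eventually_mono)
  then have "AE x in distr \<Omega> lborel T3. g (fst (snd x)) (snd (snd x)) = Kc (fst (snd x)) (snd (snd x))"
    unfolding law .
  moreover have S3: "{x \<in> space lborel. g (fst (snd x)) (snd (snd x)) = Kc (fst (snd x)) (snd (snd x))} \<in> sets (lborel :: (real \<times> real \<times> real) measure)"
  proof -
    have Qp2: "Measurable.pred (borel \<Otimes>\<^sub>M borel) (\<lambda>p::real \<times> real. g (fst p) (snd p) = Kc (fst p) (snd p))"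
      by measurable
    have "Measurable.pred ((borel :: real measure) \<Otimes>\<^sub>M (borel \<Otimes>\<^sub>M borel)) (\<lambda>x. g (fst (snd x)) (snd (snd x)) = Kc (fst (snd x)) (snd (snd x)))"
      using measurable_compose[OF measurable_snd Qp2] .
    then show ?thesis unfolding pred_def borel_prod by simp
  qed
  ultimately have AEO: "AE \<omega> in \<Omega>. g (XSt1 \<omega>) (XM \<omega>) = Kc (XSt1 \<omega>) (XM \<omega>)"
    by (simp add: AE_distr_iff[OF T3m S3] T3_def)
  have gO[measurable]: "(\<lambda>\<omega>. g (XSt1 \<omega>) (XM \<omega>)) \<in> borel_measurable \<Omega>"
    using measurable_compose[OF measurable_Pair[OF XSt1 XM] gm] by simp
  have KcO[measurable]: "(\<lambda>\<omega>. Kc (XSt1 \<omega>) (XM \<omega>)) \<in> borel_measurable \<Omega>"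
    using measurable_compose[OF measurable_Pair[OF XSt1 XM] Kcm] by simp
  have int_eq: "(\<integral>\<omega>. g (XSt1 \<omega>) (XM \<omega>) \<partial>\<Omega>) = (\<integral>\<omega>. Kc (XSt1 \<omega>) (XM \<omega>) \<partial>\<Omega>)"
    by (rule integral_cong_AE[OF gO KcO AEO])
  have sq_int: "integrable \<Omega> (\<lambda>\<omega>. h (T3 \<omega>))"
    if hm: "h \<in> borel_measurable borel" and hn: "\<And>x. 0 \<le> h x"
      and hf: "(\<integral>\<^sup>+x. ennreal (phi \<rho> abar \<beta> x * h x) \<partial>lborel) = 1" for h :: "real \<times> real \<times> real \<Rightarrow> real"
  proof (rule integrableI_bounded)
    note hm[measurable]
    show "(\<lambda>\<omega>. h (T3 \<omega>)) \<in> borel_measurable \<Omega>"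
      using measurable_comp[OF T3b hm] by (simp add: comp_def)
    have "(\<integral>\<^sup>+\<omega>. ennreal (norm (h (T3 \<omega>))) \<partial>\<Omega>) = (\<integral>\<^sup>+x. ennreal (h x) \<partial>distr \<Omega> lborel T3)"
      using hn by (subst nn_integral_distr[OF T3m]) (simp_all add: hm)
    also have "\<dots> = (\<integral>\<^sup>+x. ennreal (phi \<rho> abar \<beta> x) * ennreal (h x) \<partial>lborel)"
      unfolding law by (subst nn_integral_density) (simp_all add: hm)
    also have "\<dots> = 1"
      using hf by (simp add: ennreal_mult'[symmetric] hn)
    finally show "(\<integral>\<^sup>+\<omega>. ennreal (norm (h (T3 \<omega>))) \<partial>\<Omega>) < \<infinity>" by simp
  qed
  have iY: "integrable \<Omega> (\<lambda>\<omega>. (XSt1 \<omega>)\<^sup>2)"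
    using sq_int[of "\<lambda>x. (fst (snd x))\<^sup>2"] moment_y unfolding T3_def
    by (simp, unfold borel_prod[symmetric], measurable)
  have iM: "integrable \<Omega> (\<lambda>\<omega>. (XM \<omega>)\<^sup>2)"
    using sq_int[of "\<lambda>x. (snd (snd x))\<^sup>2"] moment_m unfolding T3_def
    by (simp, unfold borel_prod[symmetric], measurable)
  have iK: "integrable \<Omega> (\<lambda>\<omega>. Kc (XSt1 \<omega>) (XM \<omega>))"
  proof (rule Bochner_Integration.integrable_bound)
    show "integrable \<Omega> (\<lambda>\<omega>. \<bar>K0\<bar> + (A1\<^sup>2 / \<beta>) * (XSt1 \<omega>)\<^sup>2 + (A2\<^sup>2 / \<beta>) * (XM \<omega>)\<^sup>2)"
      using iY iM by (intro Bochner_Integration.integrable_add integrable_mult_right) auto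
    show "(\<lambda>\<omega>. Kc (XSt1 \<omega>) (XM \<omega>)) \<in> borel_measurable \<Omega>" by (rule KcO)
    show "AE \<omega> in \<Omega>. norm (Kc (XSt1 \<omega>) (XM \<omega>)) \<le> norm (\<bar>K0\<bar> + (A1\<^sup>2 / \<beta>) * (XSt1 \<omega>)\<^sup>2 + (A2\<^sup>2 / \<beta>) * (XM \<omega>)\<^sup>2)"
    proof (rule AE_I2)
      fix \<omega>
      have "0 \<le> (A1\<^sup>2 / \<beta>) * (XSt1 \<omega>)\<^sup>2" "0 \<le> (A2\<^sup>2 / \<beta>) * (XM \<omega>)\<^sup>2" using b0 by auto
      then show "norm (Kc (XSt1 \<omega>) (XM \<omega>)) \<le> norm (\<bar>K0\<bar> + (A1\<^sup>2 / \<beta>) * (XSt1 \<omega>)\<^sup>2 + (A2\<^sup>2 / \<beta>) * (XM \<omega>)\<^sup>2)"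
        using Kc_bound[of "XSt1 \<omega>" "XM \<omega>"] by simp
    qed
  qed
  have "RHS = (\<integral>\<omega>. RHS \<partial>\<Omega>)" by (simp add: P.prob_space)
  also have "\<dots> \<le> (\<integral>\<omega>. Kc (XSt1 \<omega>) (XM \<omega>) \<partial>\<Omega>)"
  proof (rule integral_mono[OF _ iK])
    show "integrable \<Omega> (\<lambda>\<omega>. RHS)" by simp
    fix \<omega> show "RHS \<le> Kc (XSt1 \<omega>) (XM \<omega>)" unfolding RHS_def by (rule Kc_lower)
  qed
  also have "\<dots> = (\<integral>\<omega>. g (XSt1 \<omega>) (XM \<omega>) \<partial>\<Omega>)" by (rule int_eq[symmetric])
  finally show ?thesis unfolding RHS_def g_def .
qed

end
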